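(* Consider the networked feedback system described in the context, under the input assumption stated there. Then for any integers $k_1\ge k_2\ge 0$, the random variable $\tau_{k_1}$ is independent of the channel inputs $u(k_1)$ and $u(k_2)$.
   Context: Setting: $P$ is a single-input single-output discrete-time linear time-invariant plant which is strictly proper (relative degree $\ge 1$), and $K$ is a proper SISO LTI controller. Let $\tau\ge0$ be an integer, $\mathcal D=\{0,\dots,\tau\}$, and $\{\tau_n\}$ an i.i.d. sequence with values in $\mathcal D$, $\Pr\{\tau_n=i\}=p_i$, $\sum_i p_i=1$ ($\tau_n$ is the delay of the datum sent at time $n$). With fixed real weights $\alpha_0,\dots,\alpha_\tau$ and Kronecker delta $\delta$, the channel maps its input $u$ to $u_d(k)=\sum_{i=0}^{\tau}\alpha_i\delta(\tau_{k-i}-i)u(k-i)$. The closed loop is: plant input $v(k)-u_d(k)$, plant output $y=P(v-u_d)$, controller output $u=Ky$; all signals are real and the system is at rest at $k=0$ (all signals vanish for $k<0$). Input assumption: $\{\tau_n\}$ is independent of $\{v(k)\}$, and $\{v(k)\}$ is a zero-mean white noise (independent values) with bounded variances $\sigma_v^2(k)$. *)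

theory Defs
  imports "HOL-Probability.Probability"
begin

text \<open>Causal SISO LTI system at rest (all signals vanish at negative times),
  given by its impulse response h: output at time k is the convolution
  sum over j from 0 to k of h j * w (k - j).\<close>
definition lti_out :: "(nat \<Rightarrow> real) \<Rightarrow> (nat \<Rightarrow> real) \<Rightarrow> nat \<Rightarrow> real" where
  "lti_out h w k = (\<Sum>j\<le>k. h j * w (k - j))"

text \<open>Proper = causal LTI (every impulse response above is causal);
  strictly proper (relative degree at least 1) = zero direct feedthrough.\<close>
definition strictly_proper :: "(nat \<Rightarrow> real) \<Rightarrow> bool" where
  "strictly_proper h \<longleftrightarrow> h 0 = 0"

text \<open>Channel output u_d(k) = sum_{i=0}^{tau} alpha_i delta(tau_{k-i} - i) u(k-i),
  terms with k - i < 0 vanish (system at rest).\<close>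
definition channel_out ::
  "nat \<Rightarrow> (nat \<Rightarrow> real) \<Rightarrow> (nat \<Rightarrow> nat) \<Rightarrow> (nat \<Rightarrow> real) \<Rightarrow> nat \<Rightarrow> real" where
  "channel_out tmax \<alpha> d u k =
     (\<Sum>i\<in>{i. i \<le> tmax \<and> i \<le> k}. \<alpha> i * (if d (k - i) = i then 1 else 0) * u (k - i))"

end

theory Submission imports Defs begin

lemma Z_indep:
  fixes M :: "'w measure" and tau :: "nat \<Rightarrow> 'w \<Rightarrow> nat" and v :: "nat \<Rightarrow> 'w \<Rightarrow> real"
  assumes M: "prob_space M"
    and tau_rv: "\<And>n. tau n \<in> measurable M (count_space UNIV)"
    and tau_indep: "prob_space.indep_vars M (\<lambda>_. count_space UNIV) tau UNIV"
    and v_rv: "\<And>k. v k \<in> borel_measurable M"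
    and v_white: "prob_space.indep_vars M (\<lambda>_. borel) v UNIV"
    and tau_v_indep: "prob_space.indep_var M
          (PiM UNIV (\<lambda>_. borel)) (\<lambda>\<omega> n. real (tau n \<omega>))
          (PiM UNIV (\<lambda>_. borel)) (\<lambda>\<omega> k. v k \<omega>)"
  shows "prob_space.indep_vars M (\<lambda>_. borel) (\<lambda>i \<omega>. case i of Inl n \<Rightarrow> real (tau n \<omega>) | Inr n \<Rightarrow> v n \<omega>) UNIV"
proof -
  interpret prob_space M by (rule M)
  define Z where "Z = (\<lambda>i \<omega>. case i of Inl n \<Rightarrow> real (tau n \<omega>) | Inr n \<Rightarrow> v n \<omega>)"
  have Zrv: "random_variable borel (Z i)" for i
    using tau_rv v_rv by (cases i) (auto simp: Z_def)
  have "indep_sets (\<lambda>i. {Z i -` A \<inter> space M |A. A \<in> sets borel}) UNIV"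
    unfolding indep_sets_def
  proof (intro conjI ballI allI impI)
    show "{Z i -` A \<inter> space M |A. A \<in> sets borel} \<subseteq> events" for i
      using Zrv[of i] by (auto simp: measurable_sets)
  next
    fix J :: "(nat + nat) set" and A assume J: "J \<subseteq> UNIV" "J \<noteq> {}" "finite J"
      and A: "A \<in> Pi J (\<lambda>i. {Z i -` A \<inter> space M |A. A \<in> sets borel})"
    from A have "\<forall>j\<in>J. \<exists>B. B \<in> sets borel \<and> A j = Z j -` B \<inter> space M"
      by (force simp: Pi_iff)
    then obtain B where B: "\<And>j. j \<in> J \<Longrightarrow> B j \<in> sets borel \<and> A j = Z j -` B j \<inter> space M"
      by metis
    define Jl where "Jl = Inl -` J"
    define Jr where "Jr = Inr -` J"
    have fJl: "finite Jl" unfolding Jl_def using J(3) by (intro finite_vimageI) (auto simp: inj_def)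
    have fJr: "finite Jr" unfolding Jr_def using J(3) by (intro finite_vimageI) (auto simp: inj_def)
    have Jeq: "J = Inl ` Jl \<union> Inr ` Jr"
    proof
      show "J \<subseteq> Inl ` Jl \<union> Inr ` Jr"
      proof
        fix x assume "x \<in> J" then show "x \<in> Inl ` Jl \<union> Inr ` Jr"
          unfolding Jl_def Jr_def by (cases x) auto
      qed
    qed (auto simp: Jl_def Jr_def)
    define C1 where "C1 = {x :: nat \<Rightarrow> real. \<forall>n\<in>Jl. x n \<in> B (Inl n)}"
    define C2 where "C2 = {x :: nat \<Rightarrow> real. \<forall>n\<in>Jr. x n \<in> B (Inr n)}"
    have BL: "n \<in> Jl \<Longrightarrow> B (Inl n) \<in> sets borel" for n using B[of "Inl n"] unfolding Jl_def by simp
    have BR: "n \<in> Jr \<Longrightarrow> B (Inr n) \<in> sets borel" for n using B[of "Inr n"] unfolding Jr_def by simp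
    have C1s: "C1 \<in> sets (PiM UNIV (\<lambda>_. borel))"
    proof -
      have "C1 = {x \<in> space (PiM UNIV (\<lambda>_. borel::real measure)). \<forall>n\<in>Jl. x n \<in> B (Inl n)}"
        by (auto simp: C1_def space_PiM)
      also have "\<dots> \<in> sets (PiM UNIV (\<lambda>_. borel))"
      proof (rule sets.sets_Collect_finite_All[OF _ fJl])
        fix n assume "n \<in> Jl"
        then have "(\<lambda>x. x n) -` B (Inl n) \<inter> space (PiM UNIV (\<lambda>_. borel::real measure)) \<in> sets (PiM UNIV (\<lambda>_. borel))"
          using BL by (intro measurable_sets[OF measurable_component_singleton]) auto
        then show "{x \<in> space (PiM UNIV (\<lambda>_. borel::real measure)). x n \<in> B (Inl n)} \<in> sets (PiM UNIV (\<lambda>_. borel))"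
          by (simp add: vimage_def Int_def conj_commute)
      qed
      finally show ?thesis .
    qed
    have C2s: "C2 \<in> sets (PiM UNIV (\<lambda>_. borel))"
    proof -
      have "C2 = {x \<in> space (PiM UNIV (\<lambda>_. borel::real measure)). \<forall>n\<in>Jr. x n \<in> B (Inr n)}"
        by (auto simp: C2_def space_PiM)
      also have "\<dots> \<in> sets (PiM UNIV (\<lambda>_. borel))"
      proof (rule sets.sets_Collect_finite_All[OF _ fJr])
        fix n assume "n \<in> Jr"
        then have "(\<lambda>x. x n) -` B (Inr n) \<inter> space (PiM UNIV (\<lambda>_. borel::real measure)) \<in> sets (PiM UNIV (\<lambda>_. borel))"
          using BR by (intro measurable_sets[OF measurable_component_singleton]) auto
        then show "{x \<in> space (PiM UNIV (\<lambda>_. borel::real measure)). x n \<in> B (Inr n)} \<in> sets (PiM UNIV (\<lambda>_. borel))"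
          by (simp add: vimage_def Int_def conj_commute)
      qed
      finally show ?thesis .
    qed
    define E1 where "E1 = (\<lambda>\<omega> n. real (tau n \<omega>)) -` C1 \<inter> space M"
    define E2 where "E2 = (\<lambda>\<omega> k. v k \<omega>) -` C2 \<inter> space M"
    have inter: "(\<Inter>j\<in>J. A j) = E1 \<inter> E2"
    proof -
      have "(\<Inter>j\<in>J. A j) = {\<omega>\<in>space M. \<forall>j\<in>J. Z j \<omega> \<in> B j}"
        using B J(2) by auto
      also have "\<dots> = {\<omega>\<in>space M. (\<forall>n\<in>Jl. Z (Inl n) \<omega> \<in> B (Inl n)) \<and> (\<forall>n\<in>Jr. Z (Inr n) \<omega> \<in> B (Inr n))}"
        by (subst Jeq) blast
      also have "\<dots> = E1 \<inter> E2"
        by (auto simp: E1_def E2_def C1_def C2_def Z_def)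
      finally show ?thesis .
    qed
    have pE: "prob (E1 \<inter> E2) = prob E1 * prob E2"
      using indep_varD[OF tau_v_indep C1s C2s] unfolding E1_def E2_def
      by (simp add: vimage_def Int_def conj_commute conj_left_commute)
    have pE1: "prob E1 = (\<Prod>n\<in>Jl. prob (A (Inl n)))"
    proof (cases "Jl = {}")
      case True then show ?thesis by (simp add: E1_def C1_def prob_space)
    next
      case False
      have "E1 = (\<Inter>n\<in>Jl. tau n -` (real -` B (Inl n)) \<inter> space M)"
        using False by (auto simp: E1_def C1_def)
      then have "prob E1 = (\<Prod>n\<in>Jl. prob (tau n -` (real -` B (Inl n)) \<inter> space M))"
        using indep_varsD[OF tau_indep False fJl] by simp
      also have "\<dots> = (\<Prod>n\<in>Jl. prob (A (Inl n)))"
        using B by (intro prod.cong) (auto simp: Jl_def Z_def vimage_def)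
      finally show ?thesis .
    qed
    have pE2: "prob E2 = (\<Prod>n\<in>Jr. prob (A (Inr n)))"
    proof (cases "Jr = {}")
      case True then show ?thesis by (simp add: E2_def C2_def prob_space)
    next
      case False
      have "E2 = (\<Inter>n\<in>Jr. v n -` B (Inr n) \<inter> space M)"
        using False by (auto simp: E2_def C2_def)
      then have "prob E2 = (\<Prod>n\<in>Jr. prob (v n -` B (Inr n) \<inter> space M))"
        using indep_varsD[OF v_white False fJr] BR by simp
      also have "\<dots> = (\<Prod>n\<in>Jr. prob (A (Inr n)))"
        using B by (intro prod.cong) (auto simp: Jr_def Z_def vimage_def)
      finally show ?thesis .
    qed
    have "(\<Prod>j\<in>J. prob (A j)) = (\<Prod>n\<in>Jl. prob (A (Inl n))) * (\<Prod>n\<in>Jr. prob (A (Inr n)))"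
      unfolding Jeq using fJl fJr
      by (subst prod.union_disjoint) (auto simp: prod.reindex)
    then show "prob (\<Inter>j\<in>J. A j) = (\<Prod>j\<in>J. prob (A j))"
      using inter pE pE1 pE2 by simp
  qed
  then show ?thesis using Zrv unfolding indep_vars_def2 Z_def by auto
qed

lemma comp_meas[measurable]:
  "(\<lambda>x. if c \<in> K then x c else (0::real)) \<in> borel_measurable (PiM K (\<lambda>_. borel))"
  by (cases "c \<in> K") auto

theorem lemma3:
  fixes M :: "'w measure"
    and tmax :: nat
    and p :: "nat \<Rightarrow> real"
    and \<alpha> :: "nat \<Rightarrow> real"
    and hP hK :: "nat \<Rightarrow> real"
    and tau :: "nat \<Rightarrow> 'w \<Rightarrow> nat"
    and v u y ud :: "nat \<Rightarrow> 'w \<Rightarrow> real"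
    and k1 k2 :: nat
  assumes M: "prob_space M"
    and sp: "strictly_proper hP"
    and tau_rv: "\<And>n. tau n \<in> measurable M (count_space UNIV)"
    and tau_range: "\<And>n \<omega>. \<omega> \<in> space M \<Longrightarrow> tau n \<omega> \<le> tmax"
    and tau_indep: "prob_space.indep_vars M (\<lambda>_. count_space UNIV) tau UNIV"
    and tau_dist: "\<And>n i. i \<le> tmax \<Longrightarrow> measure M {\<omega> \<in> space M. tau n \<omega> = i} = p i"
    and p_sum: "(\<Sum>i\<le>tmax. p i) = 1"
    and v_rv: "\<And>k. v k \<in> borel_measurable M"
    and v_white: "prob_space.indep_vars M (\<lambda>_. borel) v UNIV"
    and v_int: "\<And>k. integrable M (\<lambda>\<omega>. (v k \<omega>)\<^sup>2)"
    and v_mean: "\<And>k. prob_space.expectation M (v k) = 0"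
    and v_var_bdd: "\<exists>B. \<forall>k. prob_space.variance M (v k) \<le> B"
    and tau_v_indep: "prob_space.indep_var M
          (PiM UNIV (\<lambda>_. borel)) (\<lambda>\<omega> n. real (tau n \<omega>))
          (PiM UNIV (\<lambda>_. borel)) (\<lambda>\<omega> k. v k \<omega>)"
    and plant: "\<And>\<omega> k. \<omega> \<in> space M \<Longrightarrow>
          y k \<omega> = lti_out hP (\<lambda>j. v j \<omega> - ud j \<omega>) k"
    and ctrl: "\<And>\<omega> k. \<omega> \<in> space M \<Longrightarrow> u k \<omega> = lti_out hK (\<lambda>j. y j \<omega>) k"
    and chan: "\<And>\<omega> k. \<omega> \<in> space M \<Longrightarrow>
          ud k \<omega> = channel_out tmax \<alpha> (\<lambda>n. tau n \<omega>) (\<lambda>j. u j \<omega>) k"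
    and k12: "k2 \<le> k1"
  shows "prob_space.indep_set M
           {tau k1 -` A \<inter> space M | A. True}
           {(\<lambda>\<omega>. (u k1 \<omega>, u k2 \<omega>)) -` B \<inter> space M | B::(real \<times> real) set. B \<in> sets borel}"
proof -
  interpret prob_space M by (rule M)
  define Z where "Z = (\<lambda>i \<omega>. case i of Inl n \<Rightarrow> real (tau n \<omega>) | Inr n \<Rightarrow> v n \<omega>)"
  have ZI: "indep_vars (\<lambda>_. borel) Z UNIV"
    unfolding Z_def by (rule Z_indep[OF M tau_rv tau_indep v_rv v_white tau_v_indep])
  define K :: "(nat + nat) set" where "K = Inl ` {..<k1} \<union> Inr ` {..<k1}"
  define cp where "cp = (\<lambda>c (x :: nat + nat \<Rightarrow> real). if c \<in> K then x c else 0)"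
  have cp_meas[measurable]: "(\<lambda>x. cp c x) \<in> borel_measurable (PiM K (\<lambda>_. borel))" for c
    unfolding cp_def by (rule comp_meas)
  have h0: "hP 0 = 0" using sp by (simp add: strictly_proper_def)
  have rep: "\<exists>f. f \<in> borel_measurable (PiM K (\<lambda>_. borel)) \<and>
      (\<forall>\<omega>\<in>space M. u k \<omega> = f (restrict (\<lambda>i. Z i \<omega>) K))" if "k \<le> k1" for k
    using that
  proof (induction k rule: less_induct)
    case (less k)
    have "\<forall>m. \<exists>f. f \<in> borel_measurable (PiM K (\<lambda>_. borel)) \<and>
      (m < k \<longrightarrow> (\<forall>\<omega>\<in>space M. u m \<omega> = f (restrict (\<lambda>i. Z i \<omega>) K)))"
    proof
      fix m show "\<exists>f. f \<in> borel_measurable (PiM K (\<lambda>_. borel)) \<and>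
        (m < k \<longrightarrow> (\<forall>\<omega>\<in>space M. u m \<omega> = f (restrict (\<lambda>i. Z i \<omega>) K)))"
      proof (cases "m < k")
        case True
        then have "m \<le> k1" using less.prems by linarith
        from less.IH[OF True this] show ?thesis by blast
      next
        case False then show ?thesis by (intro exI[of _ "\<lambda>_. 0"]) auto
      qed
    qed
    then obtain F where F: "\<And>m. F m \<in> borel_measurable (PiM K (\<lambda>_. borel))"
      and Fr: "\<And>m \<omega>. m < k \<Longrightarrow> \<omega> \<in> space M \<Longrightarrow> u m \<omega> = F m (restrict (\<lambda>i. Z i \<omega>) K)"
      by metis
    note F[measurable]
    define f where "f = (\<lambda>x. \<Sum>j\<le>k. hK j * (\<Sum>j'\<le>k - j. hP j' *
       (cp (Inr (k - j - j')) x -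
        (\<Sum>i\<in>{i. i \<le> tmax \<and> i \<le> k - j - j'}. \<alpha> i *
           (if nat \<lfloor>cp (Inl (k - j - j' - i)) x\<rfloor> = i then 1 else 0) * F (k - j - j' - i) x))))"
    have fm: "f \<in> borel_measurable (PiM K (\<lambda>_. borel))"
      unfolding f_def by measurable
    have "u k \<omega> = f (restrict (\<lambda>i. Z i \<omega>) K)" if \<omega>: "\<omega> \<in> space M" for \<omega>
    proof -
      let ?x = "restrict (\<lambda>i. Z i \<omega>) K"
      have trm: "hP j' * (v (k - j - j') \<omega> - ud (k - j - j') \<omega>) =
        hP j' * (cp (Inr (k - j - j')) ?x -
        (\<Sum>i\<in>{i. i \<le> tmax \<and> i \<le> k - j - j'}. \<alpha> i *
           (if nat \<lfloor>cp (Inl (k - j - j' - i)) ?x\<rfloor> = i then 1 else 0) * F (k - j - j' - i) ?x))"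
        if jj: "j \<le> k" "j' \<le> k - j" for j j'
      proof (cases "j' = 0")
        case True then show ?thesis by (simp add: h0)
      next
        case False
        define n where "n = k - j - j'"
        have nk: "n < k" using False jj unfolding n_def by linarith
        have nK: "Inr n \<in> K" using nk less.prems unfolding K_def by auto
        have "ud n \<omega> = (\<Sum>i\<in>{i. i \<le> tmax \<and> i \<le> n}. \<alpha> i *
           (if nat \<lfloor>cp (Inl (n - i)) ?x\<rfloor> = i then 1 else 0) * F (n - i) ?x)"
          unfolding chan[OF \<omega>] channel_out_def
        proof (rule sum.cong[OF refl])
          fix i assume "i \<in> {i. i \<le> tmax \<and> i \<le> n}"
          then have i: "n - i < k" "Inl (n - i) \<in> K" using nk less.prems unfolding K_def by auto
          show "\<alpha> i * (if tau (n - i) \<omega> = i then 1 else 0) * u (n - i) \<omega> =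
             \<alpha> i * (if nat \<lfloor>cp (Inl (n - i)) ?x\<rfloor> = i then 1 else 0) * F (n - i) ?x"
            using i Fr[OF i(1) \<omega>] by (simp add: cp_def Z_def)
        qed
        moreover have "v n \<omega> = cp (Inr n) ?x" using nK by (simp add: cp_def Z_def)
        ultimately show ?thesis unfolding n_def by simp
      qed
      have "u k \<omega> = (\<Sum>j\<le>k. hK j * (\<Sum>j'\<le>k - j. hP j' * (v (k - j - j') \<omega> - ud (k - j - j') \<omega>)))"
        using ctrl[OF \<omega>] plant[OF \<omega>] by (simp add: lti_out_def)
      also have "\<dots> = f ?x"
        unfolding f_def
        by (intro sum.cong refl arg_cong2[where f="(*)"] trm) auto
      finally show ?thesis .
    qed
    then show ?case using fm by blast
  qed
  obtain f1 where f1: "f1 \<in> borel_measurable (PiM K (\<lambda>_. borel))"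
    "\<And>\<omega>. \<omega> \<in> space M \<Longrightarrow> u k1 \<omega> = f1 (restrict (\<lambda>i. Z i \<omega>) K)"
    using rep[of k1] by auto
  obtain f2 where f2: "f2 \<in> borel_measurable (PiM K (\<lambda>_. borel))"
    "\<And>\<omega>. \<omega> \<in> space M \<Longrightarrow> u k2 \<omega> = f2 (restrict (\<lambda>i. Z i \<omega>) K)"
    using rep[of k2] k12 by auto
  define g where "g = (\<lambda>x. (f1 x, f2 x))"
  have gm: "g \<in> measurable (PiM K (\<lambda>_. borel)) (borel :: (real \<times> real) measure)"
    unfolding g_def borel_prod[symmetric] using f1(1) f2(1) by measurable
  define Kf where "Kf = (\<lambda>b. if b then {Inl k1} else K)"
  have iv: "indep_vars (\<lambda>j. PiM (Kf j) (\<lambda>_. borel)) (\<lambda>j \<omega>. restrict (\<lambda>i. Z i \<omega>) (Kf j)) UNIV"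
    by (rule indep_vars_restrict[OF ZI]) (auto simp: disjoint_family_on_def Kf_def K_def)
  have eq1: "(\<lambda>j. PiM (Kf j) (\<lambda>_. borel)) = case_bool (PiM {Inl k1} (\<lambda>_. borel)) (PiM K (\<lambda>_. borel))"
    by (rule ext) (simp add: Kf_def split: bool.split)
  have eq2: "(\<lambda>j \<omega>. restrict (\<lambda>i. Z i \<omega>) (Kf j)) = case_bool (\<lambda>\<omega>. restrict (\<lambda>i. Z i \<omega>) {Inl k1}) (\<lambda>\<omega>. restrict (\<lambda>i. Z i \<omega>) K)"
    by (rule ext) (simp add: Kf_def split: bool.split)
  have IV: "indep_var (PiM {Inl k1} (\<lambda>_. borel)) (\<lambda>\<omega>. restrict (\<lambda>i. Z i \<omega>) {Inl k1})
      (PiM K (\<lambda>_. borel)) (\<lambda>\<omega>. restrict (\<lambda>i. Z i \<omega>) K)"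
    unfolding indep_var_def by (subst eq1[symmetric], subst eq2[symmetric]) (rule iv)
  have Y1: "(\<lambda>x :: nat + nat \<Rightarrow> real. nat \<lfloor>x (Inl k1)\<rfloor>) \<in> measurable (PiM {Inl k1} (\<lambda>_. borel :: real measure)) (count_space UNIV)"
    by measurable
  let ?W1 = "\<lambda>\<omega>. restrict (\<lambda>i. Z i \<omega>) {Inl k1}"
  let ?W2 = "\<lambda>\<omega>. restrict (\<lambda>i. Z i \<omega>) K"
  have IS: "indep_sets (case_bool {?W1 -` A \<inter> space M | A. A \<in> sets (PiM {Inl k1} (\<lambda>_. borel))}
      {?W2 -` A \<inter> space M | A. A \<in> sets (PiM K (\<lambda>_. borel))}) UNIV"
  proof -
    have "indep_sets (\<lambda>i. {case_bool ?W1 ?W2 i -` A \<inter> space M | A. A \<in> sets (case_bool (PiM {Inl k1} (\<lambda>_. borel)) (PiM K (\<lambda>_. borel)) i)}) UNIV"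
      using IV unfolding indep_var_def indep_vars_def2 by simp
    moreover have "(\<lambda>i. {case_bool ?W1 ?W2 i -` A \<inter> space M | A. A \<in> sets (case_bool (PiM {Inl k1} (\<lambda>_. borel)) (PiM K (\<lambda>_. borel)) i)})
      = case_bool {?W1 -` A \<inter> space M | A. A \<in> sets (PiM {Inl k1} (\<lambda>_. borel))}
      {?W2 -` A \<inter> space M | A. A \<in> sets (PiM K (\<lambda>_. borel))}"
      by (rule ext) (simp split: bool.split)
    ultimately show ?thesis by simp
  qed
  have W2sp: "?W2 \<omega> \<in> space (PiM K (\<lambda>_. borel :: real measure))" for \<omega>
    by (simp add: space_PiM)
  have W1sp: "?W1 \<omega> \<in> space (PiM {Inl k1} (\<lambda>_. borel :: real measure))" for \<omega>
    by (simp add: space_PiM)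
  have S1: "{tau k1 -` A \<inter> space M | A. True} \<subseteq> {?W1 -` A \<inter> space M | A. A \<in> sets (PiM {Inl k1} (\<lambda>_. borel))}"
  proof clarify
    fix A :: "nat set"
    have "tau k1 -` A \<inter> space M = ?W1 -` ((\<lambda>x :: nat + nat \<Rightarrow> real. nat \<lfloor>x (Inl k1)\<rfloor>) -` A \<inter> space (PiM {Inl k1} (\<lambda>_. borel))) \<inter> space M"
      using W1sp by (auto simp: Z_def)
    moreover have "(\<lambda>x :: nat + nat \<Rightarrow> real. nat \<lfloor>x (Inl k1)\<rfloor>) -` A \<inter> space (PiM {Inl k1} (\<lambda>_. borel)) \<in> sets (PiM {Inl k1} (\<lambda>_. borel))"
      using measurable_sets[OF Y1] by simp
    ultimately show "\<exists>A'. tau k1 -` A \<inter> space M = ?W1 -` A' \<inter> space M \<and> A' \<in> sets (PiM {Inl k1} (\<lambda>_. borel))"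
      by blast
  qed
  have S2: "{(\<lambda>\<omega>. (u k1 \<omega>, u k2 \<omega>)) -` B \<inter> space M | B::(real \<times> real) set. B \<in> sets borel}
     \<subseteq> {?W2 -` A \<inter> space M | A. A \<in> sets (PiM K (\<lambda>_. borel))}"
  proof clarify
    fix B :: "(real \<times> real) set" assume B: "B \<in> sets borel"
    have "(\<lambda>\<omega>. (u k1 \<omega>, u k2 \<omega>)) -` B \<inter> space M = ?W2 -` (g -` B \<inter> space (PiM K (\<lambda>_. borel))) \<inter> space M"
      using W2sp f1(2) f2(2) by (auto simp: g_def)
    moreover have "g -` B \<inter> space (PiM K (\<lambda>_. borel)) \<in> sets (PiM K (\<lambda>_. borel))"
      using measurable_sets[OF gm B] .
    ultimately show "\<exists>A'. (\<lambda>\<omega>. (u k1 \<omega>, u k2 \<omega>)) -` B \<inter> space M = ?W2 -` A' \<inter> space M \<and> A' \<in> sets (PiM K (\<lambda>_. borel))"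
      by blast
  qed
  show ?thesis
    unfolding indep_set_def
    by (rule indep_sets_mono_sets[OF IS]) (use S1 S2 in \<open>auto split: bool.split\<close>)
qed
end
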